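(* Let $(\xi_n)_{n\ge0}$ be a real-valued process adapted to a filtration $(\mathcal F_n)_{n\ge0}$, and suppose there exist $a\in\mathbb R$ and $b>0$ such that: (1) $\mathbb E\big((\xi_{k+1}-\xi_k)1_{\{\xi_k\ge a\}}\mid\mathcal F_k\big)\le 0$ a.s. for all $k$; (2) $\limsup_{k\to\infty}1_{\{\xi_k<a<\xi_{k+1}\}}(\xi_{k+1}-a)\le b$ almost surely; (3) $\sum_k\mathbb E\big[(\xi_{k+1}-\xi_k)^2 1_{\{\xi_k\ge a\}}\big]<\infty$. Then $\limsup_{n\to\infty}\xi_n<\infty$ almost surely. *)

theory Defs
  imports "HOL-Probability.Probability"
begin

end

theory Submission
  imports Defs
begin

lemma (in finite_measure) L2_mult:
  fixes f g :: "'a \<Rightarrow> real"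
  assumes [measurable]: "f \<in> borel_measurable M" "g \<in> borel_measurable M"
    and "integrable M (\<lambda>x. (f x)\<^sup>2)" "integrable M (\<lambda>x. (g x)\<^sup>2)"
  shows "integrable M (\<lambda>x. f x * g x)"
proof (rule Bochner_Integration.integrable_bound[where f="\<lambda>x. (f x)\<^sup>2 + (g x)\<^sup>2"])
  show "integrable M (\<lambda>x. (f x)\<^sup>2 + (g x)\<^sup>2)" using assms by auto
  show "AE x in M. norm (f x * g x) \<le> norm ((f x)\<^sup>2 + (g x)\<^sup>2)"
  proof (rule AE_I2)
    fix x
    have "0 \<le> (\<bar>f x\<bar> - \<bar>g x\<bar>)\<^sup>2" by simp
    then have "2 * \<bar>f x * g x\<bar> \<le> (f x)\<^sup>2 + (g x)\<^sup>2"
      by (simp add: power2_diff abs_mult)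
    then show "norm (f x * g x) \<le> norm ((f x)\<^sup>2 + (g x)\<^sup>2)" by auto
  qed
qed auto

lemma (in finite_measure) L2_int:
  fixes f :: "'a \<Rightarrow> real"
  assumes [measurable]: "f \<in> borel_measurable M" and "integrable M (\<lambda>x. (f x)\<^sup>2)"
  shows "integrable M f"
  using L2_mult[of f "\<lambda>_. 1"] assms by auto

lemma (in finite_measure) L2_add:
  fixes f g :: "'a \<Rightarrow> real"
  assumes [measurable]: "f \<in> borel_measurable M" "g \<in> borel_measurable M"
    and "integrable M (\<lambda>x. (f x)\<^sup>2)" "integrable M (\<lambda>x. (g x)\<^sup>2)"
  shows "integrable M (\<lambda>x. (f x + g x)\<^sup>2)" "integrable M (\<lambda>x. (f x - g x)\<^sup>2)"
proof -
  have i: "integrable M (\<lambda>x. f x * g x)" using L2_mult assms by auto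
  have "(\<lambda>x. (f x + g x)\<^sup>2) = (\<lambda>x. (f x)\<^sup>2 + 2 * (f x * g x) + (g x)\<^sup>2)"
    by (auto simp: power2_eq_square algebra_simps)
  then show "integrable M (\<lambda>x. (f x + g x)\<^sup>2)" using i assms by auto
  have "(\<lambda>x. (f x - g x)\<^sup>2) = (\<lambda>x. (f x)\<^sup>2 - 2 * (f x * g x) + (g x)\<^sup>2)"
    by (auto simp: power2_eq_square algebra_simps)
  then show "integrable M (\<lambda>x. (f x - g x)\<^sup>2)" using i assms by auto
qed


locale mt = prob_space M for M :: "'w measure" +
  fixes F :: "nat \<Rightarrow> 'w measure" and \<xi> :: "nat \<Rightarrow> 'w \<Rightarrow> real" and a :: real
  assumes subalg: "\<And>n. subalgebra M (F n)"
    and filt_mono: "\<And>m n. m \<le> n \<Longrightarrow> sets (F m) \<subseteq> sets (F n)"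
    and adapted: "\<And>n. \<xi> n \<in> borel_measurable (F n)"
    and cond1: "\<And>k. AE x in M. real_cond_exp M (F k)
        (\<lambda>y. (\<xi> (Suc k) y - \<xi> k y) * indicator {z. \<xi> k z \<ge> a} y) x \<le> 0"
    and cond3: "(\<Sum>k. \<integral>\<^sup>+ x. ennreal ((\<xi> (Suc k) x - \<xi> k x)\<^sup>2 * indicator {z. \<xi> k z \<ge> a} x) \<partial>M) < \<infinity>"
begin

definition "D k = (\<lambda>x. if a \<le> \<xi> k x then \<xi> (Suc k) x - \<xi> k x else 0)"
definition "C k = real_cond_exp M (F k) (D k)"
definition "Y k = (\<lambda>x. D k x - C k x)"
definition "S n = (\<lambda>x. \<Sum>k<n. Y k x)"

lemma Fmono: "m \<le> n \<Longrightarrow> f \<in> borel_measurable (F m) \<Longrightarrow> f \<in> borel_measurable (F n)"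
proof -
  assume "m \<le> n" "f \<in> borel_measurable (F m)"
  moreover have "subalgebra (F n) (F m)" using subalg[of n] subalg[of m] filt_mono[OF \<open>m \<le> n\<close>]
    by (auto simp: subalgebra_def)
  ultimately show ?thesis using measurable_from_subalg by blast
qed

lemma toM: "f \<in> borel_measurable (F n) \<Longrightarrow> f \<in> borel_measurable M"
  using measurable_from_subalg[OF subalg] by blast

lemma sfs: "sigma_finite_subalgebra M (F k)"
proof -
  have "finite_measure_subalgebra M (F k)"
    unfolding finite_measure_subalgebra_def finite_measure_subalgebra_axioms_def
    using subalg finite_measure_axioms by auto
  then show ?thesis by (rule finite_measure_subalgebra_is_sigma_finite)
qed

lemma xi_F: "m \<le> n \<Longrightarrow> \<xi> m \<in> borel_measurable (F n)"
  using Fmono adapted by blast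

lemma xi_M[measurable]: "\<xi> n \<in> borel_measurable M"
  using toM adapted by blast

lemma D_F: "D k \<in> borel_measurable (F (Suc k))"
proof -
  have [measurable]: "\<xi> k \<in> borel_measurable (F (Suc k))" "\<xi> (Suc k) \<in> borel_measurable (F (Suc k))"
    using xi_F by auto
  show ?thesis unfolding D_def by measurable
qed

lemma D_M[measurable]: "D k \<in> borel_measurable M" using toM D_F by blast

lemma C_F: "C k \<in> borel_measurable (F k)" unfolding C_def by simp
lemma C_M[measurable]: "C k \<in> borel_measurable M" using toM C_F by blast

lemma Y_F: "Y k \<in> borel_measurable (F (Suc k))"
proof -
  have [measurable]: "D k \<in> borel_measurable (F (Suc k))" "C k \<in> borel_measurable (F (Suc k))"
    using D_F Fmono[OF _ C_F] by auto
  show ?thesis unfolding Y_def by measurable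
qed
lemma Y_M[measurable]: "Y k \<in> borel_measurable M" using toM Y_F by blast

lemma S_F: "S n \<in> borel_measurable (F n)"
  unfolding S_def by (rule borel_measurable_sum, rule Fmono[OF _ Y_F]) auto
lemma S_M[measurable]: "S n \<in> borel_measurable M" using toM S_F by blast

lemma S_Suc: "S (Suc n) x = S n x + Y n x" by (simp add: S_def)

lemma D_ind: "(\<lambda>y. (\<xi> (Suc k) y - \<xi> k y) * indicator {z. \<xi> k z \<ge> a} y) = D k"
  by (auto simp: D_def indicator_def fun_eq_iff)

lemma C_le: "AE x in M. C k x \<le> 0"
  using cond1[of k] unfolding D_ind C_def .

definition "e k = (\<integral>\<^sup>+ x. ennreal ((D k x)\<^sup>2) \<partial>M)"

lemma e_sum: "(\<Sum>k. e k) < \<infinity>"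
proof -
  have "\<And>k x. (\<xi> (Suc k) x - \<xi> k x)\<^sup>2 * indicator {z. \<xi> k z \<ge> a} x = (D k x)\<^sup>2"
    by (auto simp: D_def indicator_def)
  then show ?thesis using cond3 unfolding e_def by simp
qed

lemma e_fin: "e k < \<infinity>"
  using ennreal_suminf_lessD[OF e_sum] .

lemma D_L2: "integrable M (\<lambda>x. (D k x)\<^sup>2)"
  by (rule integrableI_nonneg) (use e_fin in \<open>auto simp: e_def\<close>)

lemma D_int: "integrable M (D k)" using L2_int[OF D_M D_L2] .

lemma e_eq: "e k = ennreal (\<integral>x. (D k x)\<^sup>2 \<partial>M)"
  unfolding e_def by (rule nn_integral_eq_integral[OF D_L2]) auto

lemma C_L2: "integrable M (\<lambda>x. (C k x)\<^sup>2)"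
proof -
  interpret sigma_finite_subalgebra M "F k" by (rule sfs)
  have "AE x in M. (real_cond_exp M (F k) (D k) x)\<^sup>2 \<le> real_cond_exp M (F k) (\<lambda>x. (D k x)\<^sup>2) x"
    using real_cond_exp_jensens_inequality(2)[of "D k" UNIV _ _ power2] D_int D_L2 convex_power2
    by auto
  show ?thesis
  proof (rule Bochner_Integration.integrable_bound[where f="real_cond_exp M (F k) (\<lambda>x. (D k x)\<^sup>2)"])
    show "integrable M (real_cond_exp M (F k) (\<lambda>x. (D k x)\<^sup>2))" using D_L2 by auto
    show "AE x in M. norm ((C k x)\<^sup>2) \<le> norm (real_cond_exp M (F k) (\<lambda>x. (D k x)\<^sup>2) x)"
      using \<open>AE x in M. _ \<le> _\<close> unfolding C_def by eventually_elim auto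
  qed auto
qed

lemma Y_L2: "integrable M (\<lambda>x. (Y k x)\<^sup>2)"
  unfolding Y_def using L2_add(2)[OF D_M C_M D_L2 C_L2] .

lemma orth:
  assumes Zm: "Z \<in> borel_measurable (F k)" and Z2: "integrable M (\<lambda>x. (Z x)\<^sup>2)"
  shows "integrable M (\<lambda>x. Z x * Y k x)" "(\<integral>x. Z x * Y k x \<partial>M) = 0"
proof -
  interpret sigma_finite_subalgebra M "F k" by (rule sfs)
  have [measurable]: "Z \<in> borel_measurable M" using toM Zm by blast
  have i1: "integrable M (\<lambda>x. Z x * D k x)" using L2_mult D_L2 Z2 by auto
  have i2: "integrable M (\<lambda>x. Z x * C k x)" using L2_mult C_L2 Z2 by auto
  have eq: "(\<integral>x. Z x * C k x \<partial>M) = (\<integral>x. Z x * D k x \<partial>M)"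
    unfolding C_def by (rule real_cond_exp_intg(2)[OF i1 Zm D_M])
  have *: "(\<lambda>x. Z x * Y k x) = (\<lambda>x. Z x * D k x - Z x * C k x)"
    by (auto simp: Y_def algebra_simps)
  show "integrable M (\<lambda>x. Z x * Y k x)" unfolding * using i1 i2 by auto
  show "(\<integral>x. Z x * Y k x \<partial>M) = 0" unfolding * using i1 i2 eq by simp
qed

lemma Y_var: "(\<integral>x. (Y k x)\<^sup>2 \<partial>M) \<le> (\<integral>x. (D k x)\<^sup>2 \<partial>M)"
proof -
  have o: "(\<integral>x. C k x * Y k x \<partial>M) = 0" using orth(2)[OF C_F C_L2] .
  have iCD: "integrable M (\<lambda>x. C k x * D k x)" using L2_mult C_L2 D_L2 by auto
  have *: "(\<lambda>x. (Y k x)\<^sup>2) = (\<lambda>x. (D k x)\<^sup>2 - (C k x)\<^sup>2 - 2 * (C k x * Y k x))"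
    by (auto simp: Y_def power2_eq_square algebra_simps)
  have "(\<integral>x. (Y k x)\<^sup>2 \<partial>M) = (\<integral>x. (D k x)\<^sup>2 \<partial>M) - (\<integral>x. (C k x)\<^sup>2 \<partial>M) - 2 * (\<integral>x. C k x * Y k x \<partial>M)"
    unfolding * using D_L2 C_L2 orth(1)[OF C_F C_L2] by simp
  also have "\<dots> \<le> (\<integral>x. (D k x)\<^sup>2 \<partial>M)" using o by simp
  finally show ?thesis .
qed

end


context mt begin

lemma S_L2: "integrable M (\<lambda>x. (S n x)\<^sup>2)"
proof (induction n)
  case 0 then show ?case by (simp add: S_def)
next
  case (Suc n)
  have "(\<lambda>x. (S (Suc n) x)\<^sup>2) = (\<lambda>x. (S n x + Y n x)\<^sup>2)" by (simp add: S_Suc)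
  then show ?case using L2_add(1)[OF S_M Y_M Suc Y_L2] by simp
qed

lemma step_ind:
  assumes A: "A \<in> sets (F n)"
  shows "(\<integral>x. (S n x * indicator A x)\<^sup>2 \<partial>M) \<le> (\<integral>x. (S (Suc n) x * indicator A x)\<^sup>2 \<partial>M)"
proof -
  have AM[measurable]: "A \<in> sets M" using A subalg[of n] by (auto simp: subalgebra_def)
  define Z where "Z x = S n x * indicator A x" for x
  define W where "W x = Y n x * indicator A x" for x
  have [measurable]: "S n \<in> borel_measurable (F n)" by (rule S_F)
  have Zm: "Z \<in> borel_measurable (F n)" unfolding Z_def using A by measurable
  have sq: "\<And>f x. (f x * indicator A x)\<^sup>2 = (f x)\<^sup>2 * (indicator A x :: real)"
    by (auto simp: indicator_def)
  have Z2: "integrable M (\<lambda>x. (Z x)\<^sup>2)" unfolding Z_def sq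
    using integrable_real_mult_indicator[OF AM S_L2] .
  have W2: "integrable M (\<lambda>x. (W x)\<^sup>2)" unfolding W_def sq
    using integrable_real_mult_indicator[OF AM Y_L2] .
  have *: "(\<lambda>x. (S (Suc n) x * indicator A x)\<^sup>2) = (\<lambda>x. (Z x)\<^sup>2 + 2 * (Z x * Y n x) + (W x)\<^sup>2)"
    by (auto simp: Z_def W_def S_Suc indicator_def power2_eq_square algebra_simps)
  have "(\<integral>x. (S (Suc n) x * indicator A x)\<^sup>2 \<partial>M) = (\<integral>x. (Z x)\<^sup>2 \<partial>M) + 2 * (\<integral>x. Z x * Y n x \<partial>M) + (\<integral>x. (W x)\<^sup>2 \<partial>M)"
    unfolding * using Z2 W2 orth(1)[OF Zm Z2] by simp
  also have "\<dots> = (\<integral>x. (Z x)\<^sup>2 \<partial>M) + (\<integral>x. (W x)\<^sup>2 \<partial>M)" using orth(2)[OF Zm Z2] by simp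
  also have "\<dots> \<ge> (\<integral>x. (Z x)\<^sup>2 \<partial>M)" by simp
  finally show ?thesis unfolding Z_def .
qed

lemma mono_ind:
  assumes "k \<le> n" "A \<in> sets (F k)"
  shows "(\<integral>x. (S k x * indicator A x)\<^sup>2 \<partial>M) \<le> (\<integral>x. (S n x * indicator A x)\<^sup>2 \<partial>M)"
  using assms(1)
proof (induction n rule: dec_induct)
  case base then show ?case by simp
next
  case (step m)
  have "A \<in> sets (F m)" using filt_mono[OF step(1)] assms(2) by auto
  then show ?case using step(3) step_ind[of A m] by linarith
qed

lemma S_var: "(\<integral>x. (S n x)\<^sup>2 \<partial>M) \<le> (\<Sum>k<n. \<integral>x. (D k x)\<^sup>2 \<partial>M)"
proof (induction n)
  case 0 then show ?case by (simp add: S_def)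
next
  case (Suc n)
  have *: "(\<lambda>x. (S (Suc n) x)\<^sup>2) = (\<lambda>x. (S n x)\<^sup>2 + 2 * (S n x * Y n x) + (Y n x)\<^sup>2)"
    by (auto simp: S_Suc power2_eq_square algebra_simps)
  have "(\<integral>x. (S (Suc n) x)\<^sup>2 \<partial>M) = (\<integral>x. (S n x)\<^sup>2 \<partial>M) + 2 * (\<integral>x. S n x * Y n x \<partial>M) + (\<integral>x. (Y n x)\<^sup>2 \<partial>M)"
    unfolding * using S_L2 Y_L2 orth(1)[OF S_F S_L2] by simp
  also have "\<dots> = (\<integral>x. (S n x)\<^sup>2 \<partial>M) + (\<integral>x. (Y n x)\<^sup>2 \<partial>M)" using orth(2)[OF S_F S_L2] by simp
  also have "\<dots> \<le> (\<Sum>k<Suc n. \<integral>x. (D k x)\<^sup>2 \<partial>M)" using Suc Y_var[of n] by simp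
  finally show ?case .
qed

definition "V = enn2real (\<Sum>k. e k)"

lemma S_V: "(\<integral>x. (S n x)\<^sup>2 \<partial>M) \<le> V"
proof -
  have e': "enn2real (e k) = (\<integral>x. (D k x)\<^sup>2 \<partial>M)" for k
    unfolding e_eq by simp
  have "(\<Sum>k<n. \<integral>x. (D k x)\<^sup>2 \<partial>M) = (\<Sum>k<n. enn2real (e k))" using e' by simp
  also have "\<dots> = enn2real (\<Sum>k<n. e k)" using enn2real_sum[of "{..<n}" e] e_fin by (simp add: o_def)
  also have "\<dots> \<le> V" unfolding V_def
    by (rule enn2real_mono[OF sum_le_suminf[OF summableI]]) (use e_sum in auto)
  finally show ?thesis using S_var[of n] by linarith
qed

lemma V_nonneg: "0 \<le> V" unfolding V_def by simp

lemma maximal: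
  assumes l: "0 < l"
  shows "measure M {x\<in>space M. \<exists>k\<le>n. l \<le> \<bar>S k x\<bar>} \<le> V / l\<^sup>2"
proof -
  define A where "A k = {x\<in>space M. l \<le> \<bar>S k x\<bar> \<and> (\<forall>j\<in>{..<k}. \<bar>S j x\<bar> < l)}" for k
  have AF: "A k \<in> sets (F k)" for k
  proof -
    have sp: "space (F k) = space M" using subalg[of k] by (auto simp: subalgebra_def)
    have [measurable]: "S k \<in> borel_measurable (F k)" by (rule S_F)
    have [measurable]: "Measurable.pred (F k) (\<lambda>x. \<forall>j\<in>{..<k}. \<bar>S j x\<bar> < l)"
    proof (rule pred_intros_finite(3))
      fix j assume "j \<in> {..<k}"
      then have [measurable]: "S j \<in> borel_measurable (F k)" using Fmono[OF _ S_F[of j]] by auto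
      show "Measurable.pred (F k) (\<lambda>x. \<bar>S j x\<bar> < l)" by measurable
    qed auto
    show ?thesis unfolding A_def sp[symmetric] by measurable
  qed
  have AM[measurable]: "A k \<in> sets M" for k using AF[of k] subalg[of k] by (auto simp: subalgebra_def)
  have disj: "k = k'" if "x \<in> A k" "x \<in> A k'" for x k k'
  proof (rule ccontr)
    note h = that
    assume "k \<noteq> k'"
    then have "k < k' \<or> k' < k" by linarith
    then show False
    proof
      assume "k < k'"
      then have "\<bar>S k x\<bar> < l" using h(2) unfolding A_def by auto
      moreover have "l \<le> \<bar>S k x\<bar>" using h(1) unfolding A_def by auto
      ultimately show False by linarith
    next
      assume "k' < k"
      then have "\<bar>S k' x\<bar> < l" using h(1) unfolding A_def by auto
      moreover have "l \<le> \<bar>S k' x\<bar>" using h(2) unfolding A_def by auto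
      ultimately show False by linarith
    qed
  qed
  define U where "U = {x\<in>space M. \<exists>k\<le>n. l \<le> \<bar>S k x\<bar>}"
  have U_sub: "U \<subseteq> (\<Union>k\<in>{..n}. A k)"
  proof
    fix x assume "x \<in> U"
    then obtain k where k: "k \<le> n" "l \<le> \<bar>S k x\<bar>" and xs: "x \<in> space M" unfolding U_def by auto
    define k0 where "k0 = (LEAST k. l \<le> \<bar>S k x\<bar>)"
    have "l \<le> \<bar>S k0 x\<bar>" unfolding k0_def using LeastI[of "\<lambda>k. l \<le> \<bar>S k x\<bar>"] k by auto
    moreover have "k0 \<le> k" unfolding k0_def using Least_le[of "\<lambda>k. l \<le> \<bar>S k x\<bar>"] k by auto
    moreover have "\<forall>j\<in>{..<k0}. \<bar>S j x\<bar> < l" unfolding k0_def using not_less_Least by fastforce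
    ultimately show "x \<in> (\<Union>k\<in>{..n}. A k)" using k xs unfolding A_def by auto
  qed
  have "measure M U \<le> measure M (\<Union>k\<in>{..n}. A k)"
    by (rule finite_measure_mono[OF U_sub]) auto
  also have "\<dots> \<le> (\<Sum>k\<le>n. measure M (A k))"
    by (rule finite_measure_subadditive_finite) auto
  finally have mU: "measure M U \<le> (\<Sum>k\<le>n. measure M (A k))" .
  have sq: "\<And>f x B. (f x * indicator B x)\<^sup>2 = (f x)\<^sup>2 * (indicator B x :: real)"
    by (auto simp: indicator_def)
  have each: "l\<^sup>2 * measure M (A k) \<le> (\<integral>x. (S n x * indicator (A k) x)\<^sup>2 \<partial>M)" if "k \<le> n" for k
  proof -
    have "l\<^sup>2 * measure M (A k) = (\<integral>x. l\<^sup>2 * indicator (A k) x \<partial>M)"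
    proof -
      have "A k \<inter> space M = A k" using sets.sets_into_space[OF AM[of k]] by auto
      moreover have "(\<integral>x. l\<^sup>2 * indicator (A k) x \<partial>M) = l\<^sup>2 * (\<integral>x. indicator (A k) x \<partial>M)"
        by (rule integral_mult_right_zero)
      ultimately show ?thesis by simp
    qed
    also have "\<dots> \<le> (\<integral>x. (S k x * indicator (A k) x)\<^sup>2 \<partial>M)"
    proof (rule Bochner_Integration.integral_mono)
      show "integrable M (\<lambda>x. l\<^sup>2 * indicator (A k) x)"
        by (intro integrable_mult_right integrable_real_indicator) (auto simp: less_top[symmetric])
      show "integrable M (\<lambda>x. (S k x * indicator (A k) x)\<^sup>2)" unfolding sq
        using integrable_real_mult_indicator[OF AM S_L2] .
      fix x assume "x \<in> space M"
      show "l\<^sup>2 * indicator (A k) x \<le> (S k x * indicator (A k) x)\<^sup>2"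
      proof (cases "x \<in> A k")
        case True
        then have "l \<le> \<bar>S k x\<bar>" unfolding A_def by auto
        then have "l\<^sup>2 \<le> \<bar>S k x\<bar>\<^sup>2" using l by (intro power_mono) auto
        then show ?thesis using True by simp
      qed simp
    qed
    also have "\<dots> \<le> (\<integral>x. (S n x * indicator (A k) x)\<^sup>2 \<partial>M)"
      by (rule mono_ind[OF that AF])
    finally show ?thesis .
  qed
  have ind1: "(\<Sum>k\<le>n. indicator (A k) x) \<le> (1::real)" for x
  proof (cases "\<exists>k0\<in>{..n}. x \<in> A k0")
    case True
    then obtain k0 where k0: "k0 \<in> {..n}" "x \<in> A k0" by auto
    have "(\<Sum>k\<le>n. indicator (A k) x) = (\<Sum>k\<le>n. if k = k0 then 1 else (0::real))"
      by (rule sum.cong) (use disj k0 in \<open>auto simp: indicator_def\<close>)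
    also have "\<dots> = 1" using k0 by simp
    finally show ?thesis by simp
  next
    case False then show ?thesis by (simp add: indicator_def)
  qed
  have "l\<^sup>2 * measure M U \<le> (\<Sum>k\<le>n. l\<^sup>2 * measure M (A k))"
    unfolding sum_distrib_left[symmetric] using mU by (intro mult_left_mono) auto
  also have "\<dots> \<le> (\<Sum>k\<le>n. \<integral>x. (S n x * indicator (A k) x)\<^sup>2 \<partial>M)"
    by (rule sum_mono) (use each in auto)
  also have "\<dots> = (\<integral>x. (\<Sum>k\<le>n. (S n x * indicator (A k) x)\<^sup>2) \<partial>M)"
    by (rule Bochner_Integration.integral_sum[symmetric])
      (unfold sq, rule integrable_real_mult_indicator[OF AM S_L2])
  also have "\<dots> \<le> (\<integral>x. (S n x)\<^sup>2 \<partial>M)"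
  proof (rule Bochner_Integration.integral_mono)
    show "integrable M (\<lambda>x. \<Sum>k\<le>n. (S n x * indicator (A k) x)\<^sup>2)" unfolding sq
      by (intro Bochner_Integration.integrable_sum integrable_real_mult_indicator[OF AM S_L2])
    show "integrable M (\<lambda>x. (S n x)\<^sup>2)" by (rule S_L2)
    fix x
    have "(\<Sum>k\<le>n. (S n x * indicator (A k) x)\<^sup>2) = (S n x)\<^sup>2 * (\<Sum>k\<le>n. indicator (A k) x)"
      unfolding sq by (simp add: sum_distrib_left)
    also have "\<dots> \<le> (S n x)\<^sup>2 * 1" by (rule mult_left_mono[OF ind1]) simp
    finally show "(\<Sum>k\<le>n. (S n x * indicator (A k) x)\<^sup>2) \<le> (S n x)\<^sup>2" by simp
  qed
  also have "\<dots> \<le> V" by (rule S_V)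
  finally have "l\<^sup>2 * measure M U \<le> V" .
  then show ?thesis unfolding U_def using l by (simp add: field_simps)
qed

end


context mt begin

lemma sup_bound:
  assumes l: "0 < l"
  shows "measure M {x\<in>space M. \<exists>k. l \<le> \<bar>S k x\<bar>} \<le> V / l\<^sup>2"
proof -
  define B where "B n = {x\<in>space M. \<exists>k\<le>n. l \<le> \<bar>S k x\<bar>}" for n
  have Bs: "range B \<subseteq> sets M" unfolding B_def by auto
  have inc: "incseq B" unfolding B_def incseq_def by (auto intro: order_trans)
  have U: "(\<Union>n. B n) = {x\<in>space M. \<exists>k. l \<le> \<bar>S k x\<bar>}" unfolding B_def by auto
  have "(\<lambda>n. measure M (B n)) \<longlonglongrightarrow> measure M (\<Union>n. B n)"
    by (rule Lim_measure_incseq[OF Bs inc]) (simp add: emeasure_finite)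
  moreover have "\<forall>n\<ge>0. measure M (B n) \<le> V / l\<^sup>2" unfolding B_def using maximal[OF l] by auto
  ultimately have "measure M (\<Union>n. B n) \<le> V / l\<^sup>2" by (intro LIMSEQ_le_const2) auto
  then show ?thesis unfolding U .
qed

lemma AE_bdd: "AE x in M. \<exists>m::nat. \<forall>k. \<bar>S k x\<bar> < real m"
proof -
  define Bad where "Bad = {x\<in>space M. \<forall>m::nat. \<exists>k. real m \<le> \<bar>S k x\<bar>}"
  have Bs: "Bad \<in> sets M" unfolding Bad_def by measurable
  have le: "measure M Bad \<le> V / real (Suc m)" for m
  proof -
    have "measure M Bad \<le> measure M {x\<in>space M. \<exists>k. real (Suc m) \<le> \<bar>S k x\<bar>}"
      by (rule finite_measure_mono) (auto simp: Bad_def simp del: of_nat_Suc)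
    also have "\<dots> \<le> V / (real (Suc m))\<^sup>2" by (rule sup_bound) auto
    also have "\<dots> \<le> V / real (Suc m)"
      using V_nonneg by (intro divide_left_mono) (auto simp: power2_eq_square)
    finally show ?thesis .
  qed
  have "measure M Bad = 0"
  proof (rule ccontr)
    assume "measure M Bad \<noteq> 0"
    then have p: "measure M Bad > 0" using measure_nonneg[of M Bad] by linarith
    obtain n :: nat where n: "V / measure M Bad < real n" using reals_Archimedean2 by blast
    have "V < measure M Bad * real (Suc n)" using n p by (simp add: field_simps)
    then have "V / real (Suc n) < measure M Bad" by (simp add: field_simps)
    then show False using le[of n] by linarith
  qed
  then have "Bad \<in> null_sets M" using Bs by (simp add: emeasure_eq_measure null_sets_def)
  then show ?thesis
  proof (rule AE_I')
    show "{x \<in> space M. \<not> (\<exists>m::nat. \<forall>k. \<bar>S k x\<bar> < real m)} \<subseteq> Bad"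
      unfolding Bad_def by (auto simp: not_less)
  qed
qed

lemma AE_good: "AE x in M. (\<forall>k. C k x \<le> 0) \<and> (\<exists>m::nat. \<forall>k. \<bar>S k x\<bar> < real m)"
  using AE_bdd C_le by (auto simp: AE_all_countable)

lemma step_le: "(\<forall>k. C k x \<le> 0) \<Longrightarrow> a \<le> \<xi> k x \<Longrightarrow> \<xi> (Suc k) x \<le> \<xi> k x + (S (Suc k) x - S k x)"
  by (auto simp: S_Suc Y_def D_def intro: order_trans[of _ "D k x"] dest: spec[of _ k])

end

lemma path_bound:
  fixes z s :: "nat \<Rightarrow> real" and a b K :: real
  assumes step: "\<And>k. a \<le> z k \<Longrightarrow> z (Suc k) \<le> z k + (s (Suc k) - s k)"
    and sb: "\<And>k. \<bar>s k\<bar> \<le> K"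
    and ev: "eventually (\<lambda>k. z k < a \<and> a < z (Suc k) \<longrightarrow> z (Suc k) - a < b) sequentially"
    and b: "0 \<le> b"
  shows "\<exists>B. \<forall>n. z n \<le> B"
proof -
  obtain N where N: "\<And>k. k \<ge> N \<Longrightarrow> (z k < a \<and> a < z (Suc k) \<longrightarrow> z (Suc k) - a < b)"
    using ev unfolding eventually_sequentially by auto
  define B0 where "B0 = max (a + b) (Max (z ` {..N}))"
  have zle: "k \<le> N \<Longrightarrow> z k \<le> B0" for k
    unfolding B0_def by (rule max.coboundedI2, rule Max_ge) auto
  have claim: "a \<le> z n \<Longrightarrow> \<exists>s0\<le>n. z n \<le> B0 + s n - s s0" for n
  proof (induction n)
    case 0 then show ?case using zle[of 0] by auto
  next
    case (Suc n)
    show ?case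
    proof (cases "Suc n \<le> N")
      case True then show ?thesis using zle[of "Suc n"] by (intro exI[of _ "Suc n"]) auto
    next
      case False
      show ?thesis
      proof (cases "z n < a")
        case True
        have "z (Suc n) \<le> a + b"
        proof (cases "a < z (Suc n)")
          case True2: True
          then show ?thesis using N[of n] False True by auto
        next
          case False2: False
          then show ?thesis using Suc.prems b by auto
        qed
        then have "z (Suc n) \<le> B0" unfolding B0_def by auto
        then show ?thesis by (intro exI[of _ "Suc n"]) auto
      next
        case False3: False
        then obtain s0 where "s0 \<le> n" "z n \<le> B0 + s n - s s0" using Suc.IH by auto
        moreover have "z (Suc n) \<le> z n + (s (Suc n) - s n)" using step False3 by auto
        ultimately show ?thesis by (intro exI[of _ s0]) auto
      qed
    qed
  qed
  have "z n \<le> max a (B0 + 2 * K)" for n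
  proof (cases "a \<le> z n")
    case True
    then obtain s0 where "z n \<le> B0 + s n - s s0" using claim by auto
    moreover have "s n - s s0 \<le> 2 * K" using sb[of n] sb[of s0] by auto
    ultimately show ?thesis by auto
  qed auto
  then show ?thesis by blast
qed

theorem mainTheorem3:
  fixes M :: "'w measure" and F :: "nat \<Rightarrow> 'w measure"
    and \<xi> :: "nat \<Rightarrow> 'w \<Rightarrow> real" and a b :: real
  assumes prob: "prob_space M"
    and subalg: "\<And>n. subalgebra M (F n)"
    and filt_mono: "\<And>m n. m \<le> n \<Longrightarrow> sets (F m) \<subseteq> sets (F n)"
    and adapted: "\<And>n. \<xi> n \<in> borel_measurable (F n)"
    and b_pos: "b > 0"
    and cond1: "\<And>k. AE x in M. real_cond_exp M (F k)
        (\<lambda>y. (\<xi> (Suc k) y - \<xi> k y) * indicator {z. \<xi> k z \<ge> a} y) x \<le> 0"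
    and cond2: "AE x in M. limsup (\<lambda>k. ereal (indicator {z. \<xi> k z < a \<and> a < \<xi> (Suc k) z} x
        * (\<xi> (Suc k) x - a))) \<le> ereal b"
    and cond3: "(\<Sum>k. \<integral>\<^sup>+ x. ennreal ((\<xi> (Suc k) x - \<xi> k x)\<^sup>2 * indicator {z. \<xi> k z \<ge> a} x) \<partial>M) < \<infinity>"
  shows "AE x in M. limsup (\<lambda>n. ereal (\<xi> n x)) < \<infinity>"
proof -
  interpret mt M F \<xi> a
  proof (rule mt.intro[OF prob])
    show "mt_axioms M F \<xi> a"
      by (rule mt_axioms.intro) (fact subalg filt_mono adapted cond1 cond3)+
  qed
  show ?thesis
    using AE_good cond2
  proof eventually_elim
    fix x
    assume h: "(\<forall>k. C k x \<le> 0) \<and> (\<exists>m::nat. \<forall>k. \<bar>S k x\<bar> < real m)"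
      and l: "limsup (\<lambda>k. ereal (indicator {z. \<xi> k z < a \<and> a < \<xi> (Suc k) z} x
        * (\<xi> (Suc k) x - a))) \<le> ereal b"
    obtain m :: nat where m: "\<And>k. \<bar>S k x\<bar> < real m" using h by auto
    have "limsup (\<lambda>k. ereal (indicator {z. \<xi> k z < a \<and> a < \<xi> (Suc k) z} x
        * (\<xi> (Suc k) x - a))) < ereal (b + 1)" using l by (rule le_less_trans) simp
    from Limsup_lessD[OF this]
    have ev: "eventually (\<lambda>k. \<xi> k x < a \<and> a < \<xi> (Suc k) x \<longrightarrow> \<xi> (Suc k) x - a < b + 1) sequentially"
      by eventually_elim (auto simp: indicator_def)
    have "\<exists>B. \<forall>n. \<xi> n x \<le> B"
    proof (rule path_bound[where s="\<lambda>n. S n x" and K="real m" and a=a and b="b+1"])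
      show "\<And>k. a \<le> \<xi> k x \<Longrightarrow> \<xi> (Suc k) x \<le> \<xi> k x + (S (Suc k) x - S k x)"
        using step_le h by auto
      show "\<And>k. \<bar>S k x\<bar> \<le> real m" using m less_imp_le by blast
    qed (use ev b_pos in auto)
    then obtain B where B: "\<And>n. \<xi> n x \<le> B" by auto
    have "limsup (\<lambda>n. ereal (\<xi> n x)) \<le> ereal B"
      by (rule Limsup_bounded) (use B in auto)
    then show "limsup (\<lambda>n. ereal (\<xi> n x)) < \<infinity>" by (rule le_less_trans) simp
  qed
qed

end
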